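(* Let the Algorithm and assumptions (A1)–(A4) be as in the context, with constants $L_H,K_H,\delta_g,\delta_H,\nu$. Suppose the algorithm does not terminate at the $N$-th iteration, and that for every iteration $k$ the parameters satisfy $\delta_g\le\frac{9\delta_H^2}{4\sigma_k}$ and \[ \delta_H\le\min\Big\{\min\{\tfrac1{18},\tfrac{1-\rho_{TH}}{9}\}\big(\sqrt{K_H^2+4\sigma_k\varepsilon_g}-K_H\big),\ \min\{\tfrac19,\tfrac{2(1-\rho_{TH})}{9}\}\nu\varepsilon_H\Big\}. \] Then $\sigma_k\le\max\{\sigma_0,2\gamma L_H\}$ for all $k=1,2,\dots,N$.
   Context: Let $\mathcal M$ be a connected complete Riemannian manifold; $\langle\cdot,\cdot\rangle$ and $\|\cdot\|$ denote the inner product and norm on tangent spaces $T_x\mathcal M$. Let $f=\frac1n\sum_{i=1}^n f_i$ with each $f_i:\mathcal M\to\mathbb R$ twice continuously differentiable; $\mathrm{grad} f$ is the Riemannian gradient. A retraction is a smooth map $R:T\mathcal M\to\mathcal M$ whose restriction $R_x$ to $T_x\mathcal M$ satisfies $R_x(0_x)=x$, $DR_x(0_x)=\mathrm{Id}$. $\nabla^2 f\circ R_x(0_x)$ is the Hessian at $0_x$ of $f\circ R_x$ on the inner-product space $T_x\mathcal M$ (a self-adjoint operator). $\lambda_{\min}(H)$ denotes the smallest eigenvalue of a self-adjoint operator $H$. Algorithm: fix $\varepsilon_g,\varepsilon_H,\rho_{TH}\in(0,1)$, $\gamma>1$, $x_0\in\mathcal M$, $\sigma_0>0$. At iteration $k$: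 construct $G_k\in T_{x_k}\mathcal M$ and self-adjoint linear $H_k$ on $T_{x_k}\mathcal M$; if $\|G_k\|\le\varepsilon_g$ and $\lambda_{\min}(H_k)\ge-\varepsilon_H$, stop (terminate at iteration $k$); otherwise choose $\eta_k\in T_{x_k}\mathcal M$ approximately minimizing $m_k(\eta):=\langle G_k,\eta\rangle+\frac12\langle H_k[\eta],\eta\rangle+\frac13\sigma_k\|\eta\|^3$, set $\rho_k=\frac{f(x_k)-f\circ R_{x_k}(\eta_k)}{-m_k(\eta_k)}$; if $\rho_k\ge\rho_{TH}$ set $x_{k+1}=R_{x_k}(\eta_k)$, $\sigma_{k+1}=\sigma_k/\gamma$, else $x_{k+1}=x_k$, $\sigma_{k+1}=\gamma\sigma_k$. Cauchy point and eigenpoint: $\eta_k^C:=-\alpha^C G_k$ with $\alpha^C\in\arg\min_{\alpha\ge0}m_k(-\alpha G_k)$. Fix $\nu\in(0,1)$. When $\lambda_{\min}(H_k)<0$, $\eta_k^E:=\alpha^E u_k$ where $u_k$ satisfies $\langle u_k,H_k[u_k]\rangle\le\nu\lambda_{\min}(H_k)\|u_k\|^2<0$ and $\langle G_k,u_k\rangle\le0$, and $\alpha^E\in\arg\min_{\alpha\ge0}m_k(\alpha u_k)$. Assumptions: (A1) there is $L_H>0$ with $\big|f\circ R_{x_k}(\eta_k)-f(x_k)-\langle\mathrm{grad} f(x_k),\eta_k\rangle-\frac12\langle\nabla^2 f\circ R_{x_k}(0_{x_k})[\eta_k],\eta_k\rangle\big|\le\frac12L_H\|\eta_k\|^3$ for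 all $k$. (A2) there is $K_H>0$ with $\|H_k\|:=\sup_{\|\eta\|\le1}\langle\eta,H_k[\eta]\rangle\le K_H$ for all $k$. (A3) there are $\delta_g,\delta_H\in(0,1)$ with $\|G_k-\mathrm{grad} f(x_k)\|\le\delta_g$ and $\|(H_k-\nabla^2 f\circ R_{x_k}(0_{x_k}))[\eta_k]\|\le\delta_H\|\eta_k\|$ for all $k$. (A4) for all $k$, $-m_k(\eta_k)\ge-m_k(\eta_k^C)$, and $-m_k(\eta_k)\ge-m_k(\eta_k^E)$ whenever $\lambda_{\min}(H_k)<0$. *)

theory Defs
  imports "HOL-Analysis.Analysis"
begin

text \<open>A tangent space T_x M is modelled by a finite-dimensional real inner product
space (a type of class euclidean_space).\<close>

definition self_adjoint :: "('v::real_inner \<Rightarrow> 'v) \<Rightarrow> bool" where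
  "self_adjoint H \<longleftrightarrow> linear H \<and> (\<forall>u v. inner (H u) v = inner u (H v))"

definition lambda_min :: "('v::real_inner \<Rightarrow> 'v) \<Rightarrow> real" where
  "lambda_min H = Inf {l. \<exists>v. v \<noteq> 0 \<and> H v = l *\<^sub>R v}"

text \<open>The operator "norm" as defined in assumption (A2).\<close>
definition op_size :: "('v::real_inner \<Rightarrow> 'v) \<Rightarrow> real" where
  "op_size H = Sup {inner e (H e) | e. norm e \<le> 1}"

definition cubic_model :: "'v::real_inner \<Rightarrow> ('v \<Rightarrow> 'v) \<Rightarrow> real \<Rightarrow> 'v \<Rightarrow> real" where
  "cubic_model G H s e = inner G e + 1/2 * inner (H e) e + s / 3 * norm e ^ 3"

end

theory Submission
  imports Defs
begin


lemma op_size_bound: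
  fixes H :: "'v::euclidean_space \<Rightarrow> 'v"
  assumes lin: "linear H"
  shows "inner e (H e) \<le> op_size H * norm e ^ 2"
proof (cases "e = 0")
  case True
  then show ?thesis using lin by (simp add: linear_0)
next
  case False
  obtain B where B: "B > 0" "\<And>x. norm (H x) \<le> B * norm x" using linear_bounded_pos[OF lin] by blast
  have bdd: "bdd_above {inner e (H e) | e. norm e \<le> 1}"
  proof (rule bdd_aboveI)
    fix y assume "y \<in> {inner e (H e) | e. norm e \<le> 1}"
    then obtain e where e: "y = inner e (H e)" "norm e \<le> 1" by blast
    have "y \<le> norm e * norm (H e)" using e(1) Cauchy_Schwarz_ineq2 by (metis abs_le_D1)
    also have "\<dots> \<le> 1 * (B * 1)"
      using e(2) B by (intro mult_mono) (auto intro: order_trans[OF B(2)] mult_left_le)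
    finally show "y \<le> B" by simp
  qed
  define e' where "e' = e /\<^sub>R norm e"
  have ne: "norm e' \<le> 1" using False by (simp add: e'_def)
  have "inner e' (H e') \<le> op_size H" unfolding op_size_def
    by (rule cSup_upper[OF _ bdd]) (use ne in blast)
  moreover have "inner e' (H e') = inner e (H e) / norm e ^ 2"
    using lin by (simp add: e'_def linear_scale power2_eq_square field_simps)
  ultimately show ?thesis using False by (simp add: divide_le_eq)
qed


lemma eigen_lb:
  fixes G :: "'v::euclidean_space" and H :: "'v \<Rightarrow> 'v"
  assumes lin: "linear H" and sa: "\<And>v w. inner (H v) w = inner v (H w)" and sg: "sg > 0"
    and uH: "inner u (H u) \<le> mu * norm u ^ 2" and neg: "mu * norm u ^ 2 < 0"
    and Gu: "inner G u \<le> 0" and aE: "aE \<ge> 0"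
    and mn: "\<forall>a\<ge>0. cubic_model G H sg (aE *\<^sub>R u) \<le> cubic_model G H sg (a *\<^sub>R u)"
  shows "- cubic_model G H sg (aE *\<^sub>R u) \<ge> (- mu) ^ 3 / (6 * sg ^ 2)"
proof -
  have u: "u \<noteq> 0" using neg by auto
  have mu: "mu < 0" using neg by (simp add: mult_less_0_iff)
  have nu: "norm u > 0" using u by simp
  define a where "a = - mu / (sg * norm u)"
  have a0: "a \<ge> 0" unfolding a_def using mu sg nu by (intro divide_nonneg_pos) auto
  have Hu: "inner (H (a *\<^sub>R u)) (a *\<^sub>R u) = a^2 * inner u (H u)"
    using lin by (simp add: linear_scale inner_commute power2_eq_square)
  have nm: "norm (a *\<^sub>R u) ^ 3 = a^3 * norm u ^ 3" using a0 by (simp add: power_mult_distrib)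
  have "cubic_model G H sg (a *\<^sub>R u) = a * inner G u + 1/2 * a^2 * inner u (H u) + sg/3 * (a^3 * norm u ^ 3)"
    unfolding cubic_model_def Hu nm by simp
  also have "\<dots> \<le> 1/2 * a^2 * (mu * norm u ^ 2) + sg/3 * (a^3 * norm u ^ 3)"
  proof -
    have "a * inner G u \<le> 0" using Gu a0 by (simp add: mult_nonneg_nonpos)
    moreover have "a^2 * inner u (H u) \<le> a^2 * (mu * norm u ^ 2)" using uH by (simp add: mult_left_mono)
    ultimately show ?thesis by simp
  qed
  also have "\<dots> = - ((- mu) ^ 3 / (6 * sg ^ 2))"
  proof -
    have an: "a * norm u = - mu / sg" using nu by (simp add: a_def)
    have "1/2 * a^2 * (mu * norm u ^ 2) + sg/3 * (a^3 * norm u ^ 3) = 1/2 * (a * norm u)^2 * mu + sg/3 * (a * norm u)^3"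
      by (simp add: power_mult_distrib)
    also have "\<dots> = - ((- mu) ^ 3 / (6 * sg ^ 2))" unfolding an using sg by (simp add: field_simps power2_eq_square power3_eq_cube)
    finally show ?thesis .
  qed
  finally show ?thesis using mn a0 by force
qed


lemma cauchy_lb:
  fixes G :: "'v::euclidean_space" and H :: "'v \<Rightarrow> 'v"
  assumes lin: "linear H" and K: "op_size H \<le> K" and sg: "sg > 0" and s: "s \<ge> 0"
    and G: "G \<noteq> 0"
    and mn: "\<forall>a\<ge>0. cubic_model G H sg (- aC *\<^sub>R G) \<le> cubic_model G H sg (- a *\<^sub>R G)"
  shows "- cubic_model G H sg (- aC *\<^sub>R G) \<ge> s * norm G - K / 2 * s ^ 2 - sg / 3 * s ^ 3"
proof -
  define a where "a = s / norm G"
  have a0: "a \<ge> 0" using s by (simp add: a_def)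
  have ng: "norm G > 0" using G by simp
  have q: "inner G (H G) \<le> K * norm G ^ 2"
    using op_size_bound[OF lin, of G] K by (meson mult_right_mono order_trans zero_le_power2)
  have GG: "inner G G = norm G * norm G" by (simp add: power2_norm_eq_inner[symmetric] power2_eq_square)
  have "cubic_model G H sg (- a *\<^sub>R G) = - a * norm G ^ 2 + 1/2 * a^2 * inner G (H G) + sg/3 * a^3 * norm G ^ 3"
    using lin a0 GG by (simp add: cubic_model_def linear_scale linear_neg inner_commute power2_norm_eq_inner
        power_mult_distrib algebra_simps power2_eq_square)
  also have "\<dots> \<le> - a * norm G ^ 2 + 1/2 * a^2 * (K * norm G ^ 2) + sg/3 * a^3 * norm G ^ 3"
    using q by (simp add: mult_left_mono)
  also have "\<dots> = - s * norm G + K / 2 * s ^ 2 + sg / 3 * s ^ 3"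
    using ng by (simp add: a_def power2_eq_square power3_eq_cube field_simps)
  finally show ?thesis using mn a0 by force
qed



lemma arith_main:
  fixes sg dg dH rho r D E :: real
  assumes sg: "sg > 0" and rho: "rho < 1" and dH: "dH > 0" and dg: "dg \<le> 9 * dH^2 / (4 * sg)"
    and r: "r \<ge> 0" and D: "(1 - rho) * D \<ge> 243/4 * dH^3 / sg^2"
    and E: "E \<le> dg * r + 1/2 * dH * r^2 - sg/12 * r^3"
  shows "E \<le> (1 - rho) * D"
proof (cases "r \<ge> 9 * dH / sg")
  case True
  have D0: "(1 - rho) * D \<ge> 0" proof -
    have "243/4 * dH^3 / sg^2 \<ge> 0" using dH sg by simp
    then show ?thesis using D by linarith
  qed 
  have r1: "sg * r \<ge> 9 * dH" using True sg by (simp add: field_simps)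
  have "sg/12 * r^3 \<ge> 3/4 * dH * r^2"
  proof -
    have "sg/12 * r^3 = (sg * r) * r^2 / 12" by (simp add: power2_eq_square power3_eq_cube)
    also have "\<dots> \<ge> 9 * dH * r^2 / 12" using mult_right_mono[OF r1, of "r^2"] by simp
    finally show ?thesis by simp
  qed
  moreover have "1/4 * dH * r^2 \<ge> dg * r"
  proof -
    have "dg * sg \<le> 9 * dH^2 / 4" using dg sg by (simp add: field_simps)
    also have "\<dots> \<le> 1/4 * dH * (sg * r)" using r1 dH by (simp add: power2_eq_square)
    finally have "dg * sg \<le> 1/4 * dH * (sg * r)" .
    then have "dg \<le> 1/4 * dH * r" using sg by (simp add: field_simps)
    then have "dg * r \<le> (1/4 * dH * r) * r" using r by (rule mult_right_mono)
    then show ?thesis by (simp add: power2_eq_square)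
  qed
  ultimately show ?thesis using E D0 by linarith
next
  case False
  have r1: "sg * r \<le> 9 * dH" using False sg by (simp add: field_simps)
  have "dg * r \<le> 81/4 * dH^3 / sg^2"
  proof -
    have "dg * r * sg^2 = (dg * sg) * (sg * r)" by (simp add: power2_eq_square)
    also have "\<dots> \<le> (9 * dH^2 / 4) * (9 * dH)"
    proof (rule mult_mono)
      show "dg * sg \<le> 9 * dH^2 / 4" using dg sg by (simp add: field_simps)
      show "sg * r \<le> 9 * dH" by (rule r1)
      show "0 \<le> 9 * dH^2 / 4" by simp
      show "0 \<le> sg * r" using sg r by simp
    qed
    finally show ?thesis using sg by (simp add: field_simps power3_eq_cube power2_eq_square)
  qed
  moreover have "1/2 * dH * r^2 \<le> 81/2 * dH^3 / sg^2"
  proof -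
    have "(sg * r)^2 \<le> (9*dH)^2" using r1 r sg by (intro power_mono) auto
    then have "dH * (sg*r)^2 \<le> dH * (9*dH)^2" using dH by (simp add: mult_left_mono)
    then show ?thesis using sg by (simp add: field_simps power3_eq_cube power2_eq_square)
  qed
  moreover have "sg/12 * r^3 \<ge> 0" using sg r by simp
  ultimately show ?thesis using E D by linarith
qed



theorem lemma3p7:
  fixes fi :: "nat \<Rightarrow> 'm \<Rightarrow> real" and n :: nat and f :: "'m \<Rightarrow> real"
    and R :: "'m \<Rightarrow> 'v::euclidean_space \<Rightarrow> 'm"
    and gR :: "'m \<Rightarrow> 'v \<Rightarrow> 'v" and Hs :: "'m \<Rightarrow> 'v \<Rightarrow> 'v"
    and x :: "nat \<Rightarrow> 'm" and sigma :: "nat \<Rightarrow> real"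
    and G :: "nat \<Rightarrow> 'v" and H :: "nat \<Rightarrow> 'v \<Rightarrow> 'v" and eta :: "nat \<Rightarrow> 'v"
    and alphaC alphaE :: "nat \<Rightarrow> real" and u :: "nat \<Rightarrow> 'v"
    and eps_g eps_H rho_TH gamma nu L_H K_H delta_g delta_H :: real
    and N :: nat
  assumes n_pos: "n > 0"
    and f_avg: "f = (\<lambda>y. (\<Sum>i<n. fi i y) / real n)"
    and retr0: "\<And>y. R y 0 = y"
    and grad: "\<And>y v. ((\<lambda>w. f (R y w)) has_derivative (\<lambda>h. inner (gR y v) h)) (at v)"
    and hess: "\<And>y. (gR y has_derivative Hs y) (at 0)"
    and eps: "0 < eps_g" "eps_g < 1" "0 < eps_H" "eps_H < 1"
    and rho: "0 < rho_TH" "rho_TH < 1"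
    and gam: "gamma > 1"
    and sig0: "sigma 0 > 0"
    and nu: "0 < nu" "nu < 1"
    and cst: "L_H > 0" "K_H > 0" "0 < delta_g" "delta_g < 1" "0 < delta_H" "delta_H < 1"
    and H_sa: "\<And>k. k \<le> N \<Longrightarrow> self_adjoint (H k)"
    and no_stop: "\<And>k. k \<le> N \<Longrightarrow> \<not> (norm (G k) \<le> eps_g \<and> lambda_min (H k) \<ge> - eps_H)"
    and update: "\<And>k. k < N \<Longrightarrow>
        (if (f (x k) - f (R (x k) (eta k))) / (- cubic_model (G k) (H k) (sigma k) (eta k)) \<ge> rho_TH
         then x (Suc k) = R (x k) (eta k) \<and> sigma (Suc k) = sigma k / gamma
         else x (Suc k) = x k \<and> sigma (Suc k) = gamma * sigma k)"
    and A1: "\<And>k. k \<le> N \<Longrightarrow>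
        \<bar>f (R (x k) (eta k)) - f (x k) - inner (gR (x k) 0) (eta k)
          - 1/2 * inner (Hs (x k) (eta k)) (eta k)\<bar> \<le> 1/2 * L_H * norm (eta k) ^ 3"
    and A2: "\<And>k. k \<le> N \<Longrightarrow> op_size (H k) \<le> K_H"
    and A3g: "\<And>k. k \<le> N \<Longrightarrow> norm (G k - gR (x k) 0) \<le> delta_g"
    and A3H: "\<And>k. k \<le> N \<Longrightarrow> norm (H k (eta k) - Hs (x k) (eta k)) \<le> delta_H * norm (eta k)"
    and cauchy: "\<And>k. k \<le> N \<Longrightarrow> alphaC k \<ge> 0 \<and>
        (\<forall>a\<ge>0. cubic_model (G k) (H k) (sigma k) (- alphaC k *\<^sub>R G k)
               \<le> cubic_model (G k) (H k) (sigma k) (- a *\<^sub>R G k))"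
    and eigen: "\<And>k. k \<le> N \<Longrightarrow> lambda_min (H k) < 0 \<Longrightarrow>
        inner (u k) (H k (u k)) \<le> nu * lambda_min (H k) * norm (u k) ^ 2
        \<and> nu * lambda_min (H k) * norm (u k) ^ 2 < 0
        \<and> inner (G k) (u k) \<le> 0 \<and> alphaE k \<ge> 0 \<and>
        (\<forall>a\<ge>0. cubic_model (G k) (H k) (sigma k) (alphaE k *\<^sub>R u k)
               \<le> cubic_model (G k) (H k) (sigma k) (a *\<^sub>R u k))"
    and A4C: "\<And>k. k \<le> N \<Longrightarrow>
        - cubic_model (G k) (H k) (sigma k) (eta k)
          \<ge> - cubic_model (G k) (H k) (sigma k) (- alphaC k *\<^sub>R G k)"
    and A4E: "\<And>k. k \<le> N \<Longrightarrow> lambda_min (H k) < 0 \<Longrightarrow>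
        - cubic_model (G k) (H k) (sigma k) (eta k)
          \<ge> - cubic_model (G k) (H k) (sigma k) (alphaE k *\<^sub>R u k)"
    and par_g: "\<And>k. k \<le> N \<Longrightarrow> delta_g \<le> 9 * delta_H ^ 2 / (4 * sigma k)"
    and par_H: "\<And>k. k \<le> N \<Longrightarrow> delta_H \<le> min
        (min (1/18) ((1 - rho_TH) / 9) * (sqrt (K_H ^ 2 + 4 * sigma k * eps_g) - K_H))
        (min (1/9) (2 * (1 - rho_TH) / 9) * nu * eps_H)"
  shows "\<forall>k\<in>{1..N}. sigma k \<le> max (sigma 0) (2 * gamma * L_H)"
  proof -
  define M where "M = max (sigma 0) (2 * gamma * L_H)"
  have succ: "rho_TH \<le> (f (x k) - f (R (x k) (eta k))) / (- cubic_model (G k) (H k) (sigma k) (eta k))"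
    if k: "k \<le> N" and sbig: "sigma k \<ge> 2 * L_H" for k
  proof -
    define s where "s = sigma k"
    have s0: "s > 0" using sbig cst by (simp add: s_def)
    have lin: "linear (H k)" and sa: "\<And>v w. inner (H k v) w = inner v (H k w)"
      using H_sa[OF k] unfolding self_adjoint_def by auto
    define D where "D = - cubic_model (G k) (H k) (sigma k) (eta k)"
    define r where "r = norm (eta k)"
    define E where "E = f (R (x k) (eta k)) - f (x k) + D"
    have r0: "r \<ge> 0" by (simp add: r_def)
    define t1 where "t1 = f (R (x k) (eta k)) - f (x k) - inner (gR (x k) 0) (eta k)
          - 1/2 * inner (Hs (x k) (eta k)) (eta k)"
    have t1: "t1 \<le> 1/2 * L_H * r ^ 3" using A1[OF k] unfolding t1_def r_def by linarith
    have Eeq: "E = t1 + inner (gR (x k) 0 - G k) (eta k) + 1/2 * inner (Hs (x k) (eta k) - H k (eta k)) (eta k) - s/3 * r^3"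
      unfolding E_def t1_def D_def cubic_model_def s_def r_def by (simp add: inner_diff_left field_simps)
    have g1: "inner (gR (x k) 0 - G k) (eta k) \<le> delta_g * r"
    proof -
      have "inner (gR (x k) 0 - G k) (eta k) \<le> norm (gR (x k) 0 - G k) * r"
        unfolding r_def by (metis Cauchy_Schwarz_ineq2 abs_le_D1)
      also have "\<dots> \<le> delta_g * r" using A3g[OF k] r0 by (simp add: norm_minus_commute mult_right_mono)
      finally show ?thesis .
    qed
    have h1: "inner (Hs (x k) (eta k) - H k (eta k)) (eta k) \<le> delta_H * r^2"
    proof -
      have "inner (Hs (x k) (eta k) - H k (eta k)) (eta k) \<le> norm (Hs (x k) (eta k) - H k (eta k)) * r"
        unfolding r_def by (metis Cauchy_Schwarz_ineq2 abs_le_D1)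
      also have "\<dots> \<le> (delta_H * r) * r" using A3H[OF k] r0
        by (simp add: norm_minus_commute mult_right_mono r_def)
      finally show ?thesis by (simp add: power2_eq_square)
    qed
    have c3: "1/2 * L_H * r ^ 3 - s/3 * r^3 \<le> - (s/12 * r^3)"
    proof -
      have "(1/2 * L_H - s/4) * r^3 \<le> 0" using sbig r0 by (simp add: s_def mult_nonpos_nonneg)
      then show ?thesis by (simp add: algebra_simps)
    qed
    have Ebd: "E \<le> delta_g * r + 1/2 * delta_H * r^2 - s/12 * r^3"
      using Eeq t1 g1 h1 c3 by linarith
    have Dbd: "(1 - rho_TH) * D \<ge> 243/4 * delta_H^3 / s^2 \<and> D > 0"
    proof (cases "norm (G k) > eps_g")
      case True
      define q where "q = sqrt (K_H ^ 2 + 4 * s * eps_g)"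
      define z where "z = (q - K_H) / (2 * s)"
      have q2: "q^2 = K_H ^ 2 + 4 * s * eps_g" unfolding q_def using s0 eps cst by simp
      have qK: "q \<ge> K_H" unfolding q_def using s0 eps by (intro real_le_rsqrt) simp
      have z0: "z \<ge> 0" unfolding z_def using qK s0 by simp
      have zeq: "s * z^2 + K_H * z = eps_g"
      proof -
        have "s * z^2 + K_H * z = (q^2 - K_H^2) / (4 * s)" unfolding z_def using s0
          by (simp add: field_simps power2_eq_square)
        then show ?thesis using q2 s0 by simp
      qed
      have GN: "G k \<noteq> 0" using True eps by auto
      have cl: "- cubic_model (G k) (H k) s (- alphaC k *\<^sub>R G k) \<ge> z * norm (G k) - K_H / 2 * z ^ 2 - s / 3 * z ^ 3"
        using cauchy_lb[OF lin A2[OF k] s0 z0 GN] cauchy[OF k] by (simp add: s_def)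
      have "z * norm (G k) \<ge> z * eps_g" using z0 True by (simp add: mult_left_mono)
      moreover have "z * eps_g = s * z^3 + K_H * z^2" using zeq[symmetric]
        by (simp add: algebra_simps power2_eq_square power3_eq_cube)
      moreover have "K_H * z^2 \<ge> 0" using cst by simp
      ultimately have Dz: "D \<ge> 2/3 * s * z^3" using cl A4C[OF k] unfolding D_def s_def by linarith
      have mn: "min (1/18) ((1 - rho_TH) / 9) * (q - K_H) = min (1/18) ((1 - rho_TH) / 9) * (2 * s * z)"
        unfolding z_def using s0 by simp
      have pH: "delta_H \<le> min (1/18) ((1 - rho_TH) / 9) * (2 * s * z)"
        using par_H[OF k] mn unfolding q_def s_def by simp
      have sz0: "2 * s * z \<ge> 0" using s0 z0 by simp
      have d1: "delta_H \<le> 1/18 * (2 * s * z)"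
      proof -
        have "min (1/18) ((1 - rho_TH) / 9) * (2 * s * z) \<le> 1/18 * (2 * s * z)"
          by (rule mult_right_mono[OF min.cobounded1 sz0])
        then show ?thesis using pH by linarith
      qed
      have d2: "delta_H \<le> (1 - rho_TH) / 9 * (2 * s * z)"
      proof -
        have "min (1/18) ((1 - rho_TH) / 9) * (2 * s * z) \<le> (1 - rho_TH) / 9 * (2 * s * z)"
          by (rule mult_right_mono[OF min.cobounded2 sz0])
        then show ?thesis using pH by linarith
      qed
      have "delta_H^3 \<le> (1/18 * (2 * s * z)) * (1/18 * (2 * s * z)) * ((1 - rho_TH) / 9 * (2 * s * z))"
        unfolding power3_eq_cube using d1 d2 cst
        by (intro mult_mono) (auto intro: order_trans[OF less_imp_le[OF cst(5)]])
      then have "delta_H^3 / s^2 \<le> (1/18 * (2 * s * z)) * (1/18 * (2 * s * z)) * ((1 - rho_TH) / 9 * (2 * s * z)) / s^2"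
        by (rule divide_right_mono) simp
      also have "\<dots> = 2 * (1 - rho_TH) * s * z^3 / 729" using s0
        by (simp add: field_simps power2_eq_square power3_eq_cube)
      finally have c: "delta_H^3 / s^2 \<le> 2 * (1 - rho_TH) * s * z^3 / 729" .
      have "243/4 * (2 * (1 - rho_TH) * s * z^3 / 729) = (1 - rho_TH) * (1/6 * s * z^3)" by simp
      moreover have "243/4 * delta_H^3 / s^2 = 243/4 * (delta_H^3 / s^2)" by simp
      ultimately have "243/4 * delta_H^3 / s^2 \<le> (1 - rho_TH) * (1/6 * s * z^3)" using c by linarith
      also have "\<dots> \<le> (1 - rho_TH) * D"
      proof (rule mult_left_mono)
        have "s * z^3 \<ge> 0" using s0 z0 by simp
        then show "1/6 * s * z^3 \<le> D" using Dz by linarith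
        show "0 \<le> 1 - rho_TH" using rho by simp
      qed
      finally have "243/4 * delta_H^3 / s^2 \<le> (1 - rho_TH) * D" .
      moreover have "D > 0"
      proof -
        have "s * z > 0" using d1 cst by linarith
        then have "z > 0" using s0 by (simp add: zero_less_mult_iff)
        then have "2/3 * s * z^3 > 0" using s0 by simp
        then show ?thesis using Dz by linarith
      qed
      ultimately show ?thesis by simp
    next
      case False
      define lam where "lam = lambda_min (H k)"
      have lam: "lam < - eps_H" using no_stop[OF k] False unfolding lam_def by auto
      have lneg: "lambda_min (H k) < 0" using lam eps unfolding lam_def by linarith
      note ei = eigen[OF k lneg]
      have el: "- cubic_model (G k) (H k) s (alphaE k *\<^sub>R u k) \<ge> (- (nu * lam)) ^ 3 / (6 * s ^ 2)"
        using eigen_lb[OF lin sa s0, of "u k" "nu * lam" "G k" "alphaE k"] ei unfolding lam_def s_def by blast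
      have De: "D \<ge> (- (nu * lam)) ^ 3 / (6 * s ^ 2)" using el A4E[OF k lneg] unfolding D_def s_def by linarith
      have ne': "nu * eps_H \<le> nu * (- lam)" using lam nu by (intro mult_left_mono) auto
      have ne: "- (nu * lam) \<ge> nu * eps_H" using ne' by simp
      have ne0: "nu * eps_H > 0" using nu eps by simp
      have pH0: "delta_H \<le> min (1/9) (2 * (1 - rho_TH) / 9) * nu * eps_H"
        by (rule order_trans[OF par_H[OF k] min.cobounded2])
      have pH: "delta_H \<le> min (1/9) (2 * (1 - rho_TH) / 9) * (nu * eps_H)"
        using pH0 by (simp only: mult.assoc)
      have d1: "delta_H \<le> 1/9 * (nu * eps_H)"
      proof -
        have "min (1/9) (2 * (1 - rho_TH) / 9) * (nu * eps_H) \<le> 1/9 * (nu * eps_H)"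
          using ne0 by (intro mult_right_mono[OF min.cobounded1]) auto
        then show ?thesis using pH by linarith
      qed
      have d2: "delta_H \<le> 2 * (1 - rho_TH) / 9 * (nu * eps_H)"
      proof -
        have "min (1/9) (2 * (1 - rho_TH) / 9) * (nu * eps_H) \<le> 2 * (1 - rho_TH) / 9 * (nu * eps_H)"
          using ne0 by (intro mult_right_mono[OF min.cobounded2]) auto
        then show ?thesis using pH by linarith
      qed
      have "delta_H^3 \<le> (1/9 * (nu * eps_H)) * (1/9 * (nu * eps_H)) * (2 * (1 - rho_TH) / 9 * (nu * eps_H))"
        unfolding power3_eq_cube using d1 d2 cst
        by (intro mult_mono) (auto intro: order_trans[OF less_imp_le[OF cst(5)]])
      also have "\<dots> = 2 * (1 - rho_TH) * (nu * eps_H)^3 / 729" by (simp add: power3_eq_cube)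
      also have "\<dots> \<le> 2 * (1 - rho_TH) * (- (nu * lam))^3 / 729"
        using ne ne0 rho by (intro divide_right_mono mult_left_mono power_mono) auto
      finally have "delta_H^3 / s^2 \<le> 2 * (1 - rho_TH) * (- (nu * lam))^3 / 729 / s^2"
        by (rule divide_right_mono) simp
      moreover have "243/4 * (2 * (1 - rho_TH) * (- (nu * lam))^3 / 729 / s^2) = (1 - rho_TH) * ((- (nu * lam)) ^ 3 / (6 * s ^ 2))"
        using s0 by (simp add: field_simps)
      moreover have "243/4 * delta_H^3 / s^2 = 243/4 * (delta_H^3 / s^2)" by simp
      ultimately have "243/4 * delta_H^3 / s^2 \<le> (1 - rho_TH) * ((- (nu * lam)) ^ 3 / (6 * s ^ 2))"
        by linarith
      also have "\<dots> \<le> (1 - rho_TH) * D" using De rho by (intro mult_left_mono) auto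
      finally have "243/4 * delta_H^3 / s^2 \<le> (1 - rho_TH) * D" .
      moreover have "D > 0"
      proof -
        have "- (nu * lam) > 0" using ne ne0 by linarith
        then have "(- (nu * lam)) ^ 3 / (6 * s ^ 2) > 0" using s0
          by (intro divide_pos_pos zero_less_power) auto
        then show ?thesis using De by linarith
      qed
      ultimately show ?thesis by simp
    qed
    have EE: "E \<le> (1 - rho_TH) * D"
      using arith_main[OF s0 rho(2) cst(5) _ r0 _ Ebd] par_g[OF k] Dbd by (simp add: s_def)
    have D0: "D > 0" using Dbd by simp
    have "rho_TH * D \<le> f (x k) - f (R (x k) (eta k))" using EE unfolding E_def by (simp add: algebra_simps)
    then show ?thesis using D0 unfolding D_def[symmetric] by (simp add: le_divide_eq)
  qed
  have main: "k \<le> N \<longrightarrow> 0 < sigma k \<and> sigma k \<le> M" for k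
  proof (induction k)
    case 0
    then show ?case using sig0 by (simp add: M_def)
  next
    case (Suc k)
    show ?case
    proof
      assume kN: "Suc k \<le> N"
      then have k: "k < N" "k \<le> N" by auto
      with Suc.IH have ih: "0 < sigma k" "sigma k \<le> M" by auto
      note up = update[OF k(1)]
      show "0 < sigma (Suc k) \<and> sigma (Suc k) \<le> M"
      proof (cases "(f (x k) - f (R (x k) (eta k))) / (- cubic_model (G k) (H k) (sigma k) (eta k)) \<ge> rho_TH")
        case True
        then have "sigma (Suc k) = sigma k / gamma" using up by simp
        moreover have "sigma k / gamma \<le> sigma k" using ih gam by (simp add: divide_le_eq)
        ultimately show ?thesis using ih gam by simp
      next
        case False
        then have e: "sigma (Suc k) = gamma * sigma k" using up by simp
        have "sigma k < 2 * L_H" using succ[OF k(2)] False by force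
        then have g: "gamma * sigma k \<le> 2 * gamma * L_H" using gam by simp
        have "2 * gamma * L_H \<le> M" by (simp add: M_def)
        moreover have "gamma * sigma k > 0" using ih gam by simp
        ultimately show ?thesis using e g by linarith
      qed
    qed
  qed
  show ?thesis using main unfolding M_def by auto
qed

end
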